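(* For every point $\varrho_K$ of $\mathcal{Q}(r,n)$ (with residue field $K$), the induced map on Zariski tangent spaces $$\imath_*:T_{\varrho_K}\mathcal{Q}(r,n)\to T_{\imath(\varrho_K)}\mathcal{A}(r,n)$$ is injective.
   Context: Fix $V_\infty=\mathbb{C}^r$ with basis $e_a$ and $A_re_a=e_{a+1}$, $e_{r+1}=0$. $\mathcal{Q}(r,n)$ is the fine moduli space of framed cyclic representations $(V,B_1,B_2,B_3,I,J)$ up to $GL(V)$. These have $\dim V=n$ and satisfy $[B_1,B_2]+IJ=0$, $JB_3=A_rJ$, $B_3I=IA_r$ and $[B_3,B_i]=0$ for $i=1,2$; moreover no proper nonzero $B_1,B_2,B_3$-invariant subspace contains $\mathrm{Im}\,I$. $\mathcal{A}(r,n)$ is the fine moduli space of stable ADHM data $(V,B_1,B_2,I,J)$ with $[B_1,B_2]+IJ=0$ and no proper $B_1,B_2$-invariant subspace containing $\mathrm{Im}\,I$. The map $\imath$ forgets $B_3$; it preserves residue fields. *)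

theory Defs
  imports "Jordan_Normal_Form.Matrix"
begin

(* Field K containing C: a field homomorphism from complex into K. *)
definition field_ext_of_C :: "(complex \<Rightarrow> 'k::field) \<Rightarrow> bool" where
  "field_ext_of_C \<phi> \<longleftrightarrow> \<phi> 0 = 0 \<and> \<phi> 1 = 1 \<and>
     (\<forall>x y. \<phi> (x + y) = \<phi> x + \<phi> y) \<and> (\<forall>x y. \<phi> (x * y) = \<phi> x * \<phi> y)"

(* A_r e_a = e_{a+1}, e_{r+1} = 0 (0-indexed here) *)
definition A_mat :: "nat \<Rightarrow> 'k::field mat" where
  "A_mat r = mat r r (\<lambda>(a, b). if a = b + 1 then 1 else 0)"

definition comm :: "'k::field mat \<Rightarrow> 'k mat \<Rightarrow> 'k mat" where
  "comm X Y = X * Y - Y * X"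

definition is_subspace :: "nat \<Rightarrow> 'k::field vec set \<Rightarrow> bool" where
  "is_subspace n W \<longleftrightarrow> W \<subseteq> carrier_vec n \<and> 0\<^sub>v n \<in> W \<and>
     (\<forall>v\<in>W. \<forall>w\<in>W. v + w \<in> W) \<and> (\<forall>c. \<forall>v\<in>W. c \<cdot>\<^sub>v v \<in> W)"

definition invariant :: "'k::field mat \<Rightarrow> 'k vec set \<Rightarrow> bool" where
  "invariant B W \<longleftrightarrow> (\<forall>v\<in>W. B *\<^sub>v v \<in> W)"

definition contains_image :: "nat \<Rightarrow> 'k::field mat \<Rightarrow> 'k vec set \<Rightarrow> bool" where
  "contains_image r I W \<longleftrightarrow> (\<forall>u\<in>carrier_vec r. I *\<^sub>v u \<in> W)"

(* Stable ADHM datum (point of A(r,n) with residue field K) *)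
definition ADHM_stable :: "nat \<Rightarrow> nat \<Rightarrow> 'k::field mat \<Rightarrow> 'k mat \<Rightarrow> 'k mat \<Rightarrow> 'k mat \<Rightarrow> bool" where
  "ADHM_stable r n B1 B2 I J \<longleftrightarrow>
     B1 \<in> carrier_mat n n \<and> B2 \<in> carrier_mat n n \<and> I \<in> carrier_mat n r \<and> J \<in> carrier_mat r n \<and>
     comm B1 B2 + I * J = 0\<^sub>m n n \<and>
     (\<forall>W. is_subspace n W \<and> invariant B1 W \<and> invariant B2 W \<and> contains_image r I W
          \<longrightarrow> W = carrier_vec n)"

(* Stable framed cyclic representation (point of Q(r,n) with residue field K) *)
definition Q_stable :: "nat \<Rightarrow> nat \<Rightarrow> 'k::field mat \<Rightarrow> 'k mat \<Rightarrow> 'k mat \<Rightarrow> 'k mat \<Rightarrow> 'k mat \<Rightarrow> bool" where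
  "Q_stable r n B1 B2 B3 I J \<longleftrightarrow>
     B1 \<in> carrier_mat n n \<and> B2 \<in> carrier_mat n n \<and> B3 \<in> carrier_mat n n \<and>
     I \<in> carrier_mat n r \<and> J \<in> carrier_mat r n \<and>
     comm B1 B2 + I * J = 0\<^sub>m n n \<and> J * B3 = A_mat r * J \<and> B3 * I = I * A_mat r \<and>
     comm B3 B1 = 0\<^sub>m n n \<and> comm B3 B2 = 0\<^sub>m n n \<and>
     (\<forall>W. is_subspace n W \<and> invariant B1 W \<and> invariant B2 W \<and> invariant B3 W \<and> contains_image r I W
          \<longrightarrow> W = carrier_vec n)"

(* First-order deformations (K[eps]-points over the given point) of the ADHM equations:
   tangent vectors (b1,b2,i,j) *)
definition ADHM_tangent :: "nat \<Rightarrow> nat \<Rightarrow> 'k::field mat \<Rightarrow> 'k mat \<Rightarrow> 'k mat \<Rightarrow> 'k mat \<Rightarrow>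
     'k mat \<times> 'k mat \<times> 'k mat \<times> 'k mat \<Rightarrow> bool" where
  "ADHM_tangent r n B1 B2 I J t \<longleftrightarrow> (case t of (b1, b2, i, j) \<Rightarrow>
     b1 \<in> carrier_mat n n \<and> b2 \<in> carrier_mat n n \<and> i \<in> carrier_mat n r \<and> j \<in> carrier_mat r n \<and>
     comm b1 B2 + comm B1 b2 + i * J + I * j = 0\<^sub>m n n)"

(* Infinitesimal GL(V)-action: xi in gl(V) acts by ([xi,B1],[xi,B2],xi I, -J xi) *)
definition ADHM_equiv :: "nat \<Rightarrow> nat \<Rightarrow> 'k::field mat \<Rightarrow> 'k mat \<Rightarrow> 'k mat \<Rightarrow> 'k mat \<Rightarrow>
     'k mat \<times> 'k mat \<times> 'k mat \<times> 'k mat \<Rightarrow> 'k mat \<times> 'k mat \<times> 'k mat \<times> 'k mat \<Rightarrow> bool" where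
  "ADHM_equiv r n B1 B2 I J t t' \<longleftrightarrow> (case t of (b1, b2, i, j) \<Rightarrow> case t' of (b1', b2', i', j') \<Rightarrow>
     (\<exists>\<xi> \<in> carrier_mat n n.
        b1 - b1' = comm \<xi> B1 \<and> b2 - b2' = comm \<xi> B2 \<and> i - i' = \<xi> * I \<and> j - j' = - (J * \<xi>)))"

definition Q_tangent :: "nat \<Rightarrow> nat \<Rightarrow> 'k::field mat \<Rightarrow> 'k mat \<Rightarrow> 'k mat \<Rightarrow> 'k mat \<Rightarrow> 'k mat \<Rightarrow>
     'k mat \<times> 'k mat \<times> 'k mat \<times> 'k mat \<times> 'k mat \<Rightarrow> bool" where
  "Q_tangent r n B1 B2 B3 I J t \<longleftrightarrow> (case t of (b1, b2, b3, i, j) \<Rightarrow>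
     b1 \<in> carrier_mat n n \<and> b2 \<in> carrier_mat n n \<and> b3 \<in> carrier_mat n n \<and>
     i \<in> carrier_mat n r \<and> j \<in> carrier_mat r n \<and>
     comm b1 B2 + comm B1 b2 + i * J + I * j = 0\<^sub>m n n \<and>
     j * B3 + J * b3 = A_mat r * j \<and>
     b3 * I + B3 * i = i * A_mat r \<and>
     comm b3 B1 + comm B3 b1 = 0\<^sub>m n n \<and>
     comm b3 B2 + comm B3 b2 = 0\<^sub>m n n)"

definition Q_equiv :: "nat \<Rightarrow> nat \<Rightarrow> 'k::field mat \<Rightarrow> 'k mat \<Rightarrow> 'k mat \<Rightarrow> 'k mat \<Rightarrow> 'k mat \<Rightarrow>
     'k mat \<times> 'k mat \<times> 'k mat \<times> 'k mat \<times> 'k mat \<Rightarrow> 'k mat \<times> 'k mat \<times> 'k mat \<times> 'k mat \<times> 'k mat \<Rightarrow> bool" where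
  "Q_equiv r n B1 B2 B3 I J t t' \<longleftrightarrow> (case t of (b1, b2, b3, i, j) \<Rightarrow> case t' of (b1', b2', b3', i', j') \<Rightarrow>
     (\<exists>\<xi> \<in> carrier_mat n n.
        b1 - b1' = comm \<xi> B1 \<and> b2 - b2' = comm \<xi> B2 \<and> b3 - b3' = comm \<xi> B3 \<and>
        i - i' = \<xi> * I \<and> j - j' = - (J * \<xi>)))"

(* the differential of the forgetful map: forget b3 *)
definition forget_tangent :: "'k mat \<times> 'k mat \<times> 'k mat \<times> 'k mat \<times> 'k mat \<Rightarrow> 'k mat \<times> 'k mat \<times> 'k mat \<times> 'k mat" where
  "forget_tangent t = (case t of (b1, b2, b3, i, j) \<Rightarrow> (b1, b2, i, j))"

end

theory Submission
  imports Defs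
begin

lemma d1: "dim_row A = dim_row B \<Longrightarrow> dim_col A = dim_col B \<Longrightarrow> dim_col A = dim_row (C::'a::ring mat) \<Longrightarrow> (A - B) * C = A * C - B * C"
  by (rule minus_mult_distrib_mat[of A "dim_row A" "dim_col A" B C "dim_col C"]; intro carrier_matI; simp)
lemma d2: "dim_row A = dim_row B \<Longrightarrow> dim_col A = dim_col B \<Longrightarrow> dim_col A = dim_row (C::'a::ring mat) \<Longrightarrow> (A + B) * C = A * C + B * C"
  by (rule add_mult_distrib_mat[of A "dim_row A" "dim_col A" B C "dim_col C"]; intro carrier_matI; simp)
lemma d3: "dim_row B = dim_row C \<Longrightarrow> dim_col B = dim_col C \<Longrightarrow> dim_col A = dim_row (B::'a::ring mat) \<Longrightarrow> A * (B - C) = A * B - A * C"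
  by (rule mult_minus_distrib_mat[of A "dim_row A" "dim_col A" B "dim_col B" C]; intro carrier_matI; simp)
lemma d4: "dim_row B = dim_row C \<Longrightarrow> dim_col B = dim_col C \<Longrightarrow> dim_col A = dim_row (B::'a::ring mat) \<Longrightarrow> A * (B + C) = A * B + A * C"
  by (rule mult_add_distrib_mat[of A "dim_row A" "dim_col A" B "dim_col B" C]; intro carrier_matI; simp)
lemma d5: "dim_col A = dim_row B \<Longrightarrow> dim_col B = dim_row (C::'a::semiring_0 mat) \<Longrightarrow> (A * B) * C = A * (B * C)"
  by (rule assoc_mult_mat[of A "dim_row A" "dim_col A" B "dim_col B" C "dim_col C"]; intro carrier_matI; simp)
lemmas dist = d1 d2 d3 d4 d5

lemma entry: "X = Y \<Longrightarrow> X $$ (a,b) = Y $$ (a,b)" by simp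

lemma F1:
  fixes b3 b3' B3 I i i' \<xi> A :: "'k::field mat"
  assumes c: "b3 \<in> carrier_mat n n" "b3' \<in> carrier_mat n n" "B3 \<in> carrier_mat n n" "\<xi> \<in> carrier_mat n n"
    "I \<in> carrier_mat n r" "i \<in> carrier_mat n r" "i' \<in> carrier_mat n r" "A \<in> carrier_mat r r"
  and e1: "b3 * I + B3 * i = i * A" and e2: "b3' * I + B3 * i' = i' * A"
  and e3: "i - i' = \<xi> * I" and e4: "B3 * I = I * A"
  shows "(b3 - b3' - comm \<xi> B3) * I = 0\<^sub>m n r"
proof -
  note dd = carrier_matD[OF c(1)] carrier_matD[OF c(2)] carrier_matD[OF c(3)] carrier_matD[OF c(4)]
     carrier_matD[OF c(5)] carrier_matD[OF c(6)] carrier_matD[OF c(7)] carrier_matD[OF c(8)]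
  have s1: "(b3 - b3' - comm \<xi> B3) * I = b3 * I - b3' * I - (\<xi> * (B3 * I) - B3 * (\<xi> * I))"
    by (simp add: comm_def dist dd)
  have s2: "\<xi> * (B3 * I) = (i - i') * A"
    by (simp add: e4 e3 d5[symmetric] dd)
  have s3: "(i - i') * A = i * A - i' * A" "B3 * (i - i') = B3 * i - B3 * i'"
    by (simp_all add: dist dd)
  have s4: "b3 * I - b3' * I - (i * A - i' * A - (B3 * i - B3 * i')) = 0\<^sub>m n r"
  proof (rule eq_matI)
    fix a b assume ab: "a < dim_row (0\<^sub>m n r :: 'k mat)" "b < dim_col (0\<^sub>m n r :: 'k mat)"
    have h1: "(b3 * I) $$ (a,b) + (B3 * i) $$ (a,b) = (i * A) $$ (a,b)"
      using entry[OF e1, of a b] ab dd by (simp del: index_mult_mat(1))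
    have h2: "(b3' * I) $$ (a,b) + (B3 * i') $$ (a,b) = (i' * A) $$ (a,b)"
      using entry[OF e2, of a b] ab dd by (simp del: index_mult_mat(1))
    show "(b3 * I - b3' * I - (i * A - i' * A - (B3 * i - B3 * i'))) $$ (a,b) = 0\<^sub>m n r $$ (a,b)"
      using ab dd by (simp del: index_mult_mat(1) add: h1[symmetric] h2[symmetric] algebra_simps)
  qed (simp_all add: dd)
  show ?thesis unfolding s1 s2 s3 e3[symmetric] s4 by simp
qed

lemma lin:
  fixes x1 y1 z1 w1 x2 y2 z2 w2 p q s t u v :: "'a::ab_group_add"
  assumes "x1 - y1 + (z1 - w1) = 0" "x2 - y2 + (z2 - w2) = 0" "z1 - z2 = p - q" "w1 - w2 = s - t" "u = s" "q = v"
  shows "x1 - x2 - (u - p) = y1 - y2 - (t - v)"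
proof -
  have "x1 - x2 - (u-p) - (y1 - y2 - (t - v)) = (x1 - y1 + (z1 - w1)) - (x2 - y2 + (z2 - w2)) - (z1 - z2 - (p - q)) + (w1 - w2 - (s - t)) - (u - s) + (q - v)"
    by (simp add: algebra_simps)
  then show ?thesis using assms by simp
qed

lemma F2:
  fixes b3 b3' B3 B1 b1 b1' \<xi> :: "'k::field mat"
  assumes c: "b3 \<in> carrier_mat n n" "b3' \<in> carrier_mat n n" "B3 \<in> carrier_mat n n" "\<xi> \<in> carrier_mat n n"
    "B1 \<in> carrier_mat n n" "b1 \<in> carrier_mat n n" "b1' \<in> carrier_mat n n"
  and e1: "comm b3 B1 + comm B3 b1 = 0\<^sub>m n n" and e2: "comm b3' B1 + comm B3 b1' = 0\<^sub>m n n"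
  and e3: "b1 - b1' = comm \<xi> B1" and e4: "comm B3 B1 = 0\<^sub>m n n"
  shows "(b3 - b3' - comm \<xi> B3) * B1 = B1 * (b3 - b3' - comm \<xi> B3)"
proof -
  note dd = carrier_matD[OF c(1)] carrier_matD[OF c(2)] carrier_matD[OF c(3)] carrier_matD[OF c(4)]
     carrier_matD[OF c(5)] carrier_matD[OF c(6)] carrier_matD[OF c(7)]
  have m0: "B3 * B1 = B1 * B3"
  proof (rule eq_matI)
    fix a b assume ab: "a < dim_row (B1 * B3)" "b < dim_col (B1 * B3)"
    show "(B3 * B1) $$ (a,b) = (B1 * B3) $$ (a,b)"
      using entry[OF e4[unfolded comm_def], of a b] ab dd by (simp del: index_mult_mat(1))
  qed (simp_all add: dd)
  have m3: "B3 * b1 - B3 * b1' = B3 * (\<xi> * B1) - B3 * (B1 * \<xi>)"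
  proof -
    have "B3 * (b1 - b1') = B3 * comm \<xi> B1" by (simp add: e3)
    then show ?thesis by (simp add: comm_def dist dd)
  qed
  have m4: "b1 * B3 - b1' * B3 = \<xi> * (B1 * B3) - B1 * (\<xi> * B3)"
  proof -
    have "(b1 - b1') * B3 = comm \<xi> B1 * B3" by (simp add: e3)
    then show ?thesis by (simp add: comm_def dist dd)
  qed
  have m5: "\<xi> * (B3 * B1) = \<xi> * (B1 * B3)" by (simp add: m0)
  have m6: "B3 * (B1 * \<xi>) = B1 * (B3 * \<xi>)"
    by (simp add: m0 d5[symmetric] dd)
  have lhs: "(b3 - b3' - comm \<xi> B3) * B1 - B1 * (b3 - b3' - comm \<xi> B3) =
     b3 * B1 - b3' * B1 - (\<xi> * (B3 * B1) - B3 * (\<xi> * B1)) - (B1 * b3 - B1 * b3' - (B1 * (\<xi> * B3) - B1 * (B3 * \<xi>)))"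
    by (simp add: comm_def dist dd)
  have "(b3 - b3' - comm \<xi> B3) * B1 - B1 * (b3 - b3' - comm \<xi> B3) = 0\<^sub>m n n"
    unfolding lhs
  proof (rule eq_matI)
    fix a b assume ab: "a < dim_row (0\<^sub>m n n :: 'k mat)" "b < dim_col (0\<^sub>m n n :: 'k mat)"
    note E = entry[of _ _ a b]
    have h1: "(b3 * B1) $$ (a,b) - (B1 * b3) $$ (a,b) + ((B3 * b1) $$ (a,b) - (b1 * B3) $$ (a,b)) = 0"
      using E[OF e1[unfolded comm_def]] ab dd by (simp del: index_mult_mat(1))
    have h2: "(b3' * B1) $$ (a,b) - (B1 * b3') $$ (a,b) + ((B3 * b1') $$ (a,b) - (b1' * B3) $$ (a,b)) = 0"
      using E[OF e2[unfolded comm_def]] ab dd by (simp del: index_mult_mat(1))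
    have h3: "(B3 * b1) $$ (a,b) - (B3 * b1') $$ (a,b) = (B3 * (\<xi> * B1)) $$ (a,b) - (B3 * (B1 * \<xi>)) $$ (a,b)"
      using E[OF m3] ab dd by (simp del: index_mult_mat(1))
    have h4: "(b1 * B3) $$ (a,b) - (b1' * B3) $$ (a,b) = (\<xi> * (B1 * B3)) $$ (a,b) - (B1 * (\<xi> * B3)) $$ (a,b)"
      using E[OF m4] ab dd by (simp del: index_mult_mat(1))
    have h5: "(\<xi> * (B3 * B1)) $$ (a,b) = (\<xi> * (B1 * B3)) $$ (a,b)" using E[OF m5] .
    have h6: "(B3 * (B1 * \<xi>)) $$ (a,b) = (B1 * (B3 * \<xi>)) $$ (a,b)" using E[OF m6] .
    show "(b3 * B1 - b3' * B1 - (\<xi> * (B3 * B1) - B3 * (\<xi> * B1)) - (B1 * b3 - B1 * b3' - (B1 * (\<xi> * B3) - B1 * (B3 * \<xi>)))) $$ (a,b) = 0\<^sub>m n n $$ (a,b)"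
      using ab by - (simp del: index_mult_mat(1) add: dd, rule lin[OF h1 h2 h3 h4 h5 h6])
  qed (simp_all add: dd)
  then show ?thesis
  proof -
    assume z: "(b3 - b3' - comm \<xi> B3) * B1 - B1 * (b3 - b3' - comm \<xi> B3) = 0\<^sub>m n n"
    show ?thesis
    proof (rule eq_matI)
      fix a b assume ab: "a < dim_row (B1 * (b3 - b3' - comm \<xi> B3))" "b < dim_col (B1 * (b3 - b3' - comm \<xi> B3))"
      show "((b3 - b3' - comm \<xi> B3) * B1) $$ (a,b) = (B1 * (b3 - b3' - comm \<xi> B3)) $$ (a,b)"
        using entry[OF z, of a b] ab dd by (simp del: index_mult_mat(1) add: comm_def)
    qed (simp_all add: dd comm_def)
  qed
qed

lemma mat_vec_zero: "A \<in> carrier_mat m n \<Longrightarrow> A *\<^sub>v 0\<^sub>v n = (0\<^sub>v m :: 'a::semiring_0 vec)"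
  by (intro eq_vecI) auto

lemma iter_carrier: "B \<in> carrier_mat n n \<Longrightarrow> v \<in> carrier_vec n \<Longrightarrow> ((\<lambda>v. B *\<^sub>v v) ^^ k) v \<in> carrier_vec n"
  by (induction k) auto

lemma iter_comm:
  fixes B C D :: "'a::comm_ring_1 mat"
  assumes "B \<in> carrier_mat n n" "C \<in> carrier_mat n m" "D \<in> carrier_mat m m" "B * C = C * D" "v \<in> carrier_vec m"
  shows "((\<lambda>v. B *\<^sub>v v) ^^ k) (C *\<^sub>v v) = C *\<^sub>v (((\<lambda>v. D *\<^sub>v v) ^^ k) v)"
proof (induction k)
  case 0 then show ?case by simp
next
  case (Suc k)
  have w: "((\<lambda>v. D *\<^sub>v v) ^^ k) v \<in> carrier_vec m" using iter_carrier assms by blast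
  have "((\<lambda>v. B *\<^sub>v v) ^^ Suc k) (C *\<^sub>v v) = B *\<^sub>v (C *\<^sub>v (((\<lambda>v. D *\<^sub>v v) ^^ k) v))"
    using Suc by simp
  also have "\<dots> = (B * C) *\<^sub>v (((\<lambda>v. D *\<^sub>v v) ^^ k) v)"
    by (rule assoc_mult_mat_vec[symmetric]) (use assms w in auto)
  also have "\<dots> = C *\<^sub>v (D *\<^sub>v (((\<lambda>v. D *\<^sub>v v) ^^ k) v))" unfolding assms(4) using assms w by simp
  finally show ?case by simp
qed

lemma iter_add:
  fixes B :: "'a::comm_ring_1 mat"
  assumes "B \<in> carrier_mat n n" "v \<in> carrier_vec n" "w \<in> carrier_vec n"
  shows "((\<lambda>v. B *\<^sub>v v) ^^ k) (v + w) = ((\<lambda>v. B *\<^sub>v v) ^^ k) v + ((\<lambda>v. B *\<^sub>v v) ^^ k) w"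
proof (induction k)
  case 0 then show ?case by simp
next
  case (Suc k)
  have "((\<lambda>v. B *\<^sub>v v) ^^ k) v \<in> carrier_vec n" "((\<lambda>v. B *\<^sub>v v) ^^ k) w \<in> carrier_vec n"
    using iter_carrier assms by blast+
  then show ?case using Suc assms by (simp add: mult_add_distrib_mat_vec)
qed

lemma iter_smult:
  fixes B :: "'a::field mat"
  assumes "B \<in> carrier_mat n n" "v \<in> carrier_vec n"
  shows "((\<lambda>v. B *\<^sub>v v) ^^ k) (a \<cdot>\<^sub>v v) = a \<cdot>\<^sub>v ((\<lambda>v. B *\<^sub>v v) ^^ k) v"
proof (induction k)
  case 0 then show ?case by simp
next
  case (Suc k)
  have "((\<lambda>v. B *\<^sub>v v) ^^ k) v \<in> carrier_vec n"
    using iter_carrier assms by blast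
  then show ?case using Suc assms by (simp add: mult_mat_vec)
qed

lemma iter_zero:
  fixes B :: "'a::comm_ring_1 mat"
  assumes "B \<in> carrier_mat n n"
  shows "((\<lambda>v. B *\<^sub>v v) ^^ k) (0\<^sub>v n) = 0\<^sub>v n"
  by (induction k) (use assms mat_vec_zero in auto)

lemma comm_zero: "X \<in> carrier_mat n n \<Longrightarrow> Y \<in> carrier_mat n n \<Longrightarrow> comm X Y = 0\<^sub>m n n \<Longrightarrow> X * Y = Y * X"
proof (rule eq_matI)
  fix a b assume "X \<in> carrier_mat n n" "Y \<in> carrier_mat n n" "comm X Y = 0\<^sub>m n n"
    "a < dim_row (Y * X)" "b < dim_col (Y * X)"
  note h = this
  have e: "(X * Y - Y * X) $$ (a,b) = 0" using h by (simp add: comm_def)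
  then show "(X * Y) $$ (a,b) = (Y * X) $$ (a,b)"
    using h by (simp del: index_mult_mat(1))
qed auto

theorem lemma3p7:
  fixes \<phi> :: "complex \<Rightarrow> 'k::field"
    and B1 B2 B3 I J :: "'k mat"
    and t t' :: "'k mat \<times> 'k mat \<times> 'k mat \<times> 'k mat \<times> 'k mat"
  assumes "field_ext_of_C \<phi>"
    and "Q_stable r n B1 B2 B3 I J"
    and "Q_tangent r n B1 B2 B3 I J t"
    and "Q_tangent r n B1 B2 B3 I J t'"
    and "ADHM_equiv r n B1 B2 I J (forget_tangent t) (forget_tangent t')"
  shows "Q_equiv r n B1 B2 B3 I J t t'"
proof -
  obtain b1 b2 b3 i j where tt: "t = (b1, b2, b3, i, j)" by (cases t) auto
  obtain b1' b2' b3' i' j' where tt': "t' = (b1', b2', b3', i', j')" by (cases t') auto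
  note Q = assms(2)[unfolded Q_stable_def]
  note T = assms(3)[unfolded Q_tangent_def tt, simplified]
  note T' = assms(4)[unfolded Q_tangent_def tt', simplified]
  from assms(5)[unfolded ADHM_equiv_def forget_tangent_def tt tt', simplified]
  obtain \<xi> where xi: "\<xi> \<in> carrier_mat n n" "b1 - b1' = comm \<xi> B1" "b2 - b2' = comm \<xi> B2"
    "i - i' = \<xi> * I" "j - j' = - (J * \<xi>)" by blast
  have A: "A_mat r \<in> carrier_mat r r" by (simp add: A_mat_def)
  define c where "c = b3 - b3' - comm \<xi> B3"
  have cc: "c \<in> carrier_mat n n" unfolding c_def comm_def using T T' Q xi
    by (auto intro!: minus_carrier_mat)
  have cI: "c * I = 0\<^sub>m n r" unfolding c_def
    by (rule F1[OF _ _ _ _ _ _ _ A]) (use T T' Q xi in auto)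
  have cB1: "c * B1 = B1 * c" unfolding c_def
    by (rule F2) (use T T' Q xi in auto)
  have cB2: "c * B2 = B2 * c" unfolding c_def
    by (rule F2) (use T T' Q xi in auto)
  have B31: "B3 * B1 = B1 * B3" by (rule comm_zero) (use Q in auto)
  have B32: "B3 * B2 = B2 * B3" by (rule comm_zero) (use Q in auto)
  have B3I: "B3 * I = I * A_mat r" using Q by auto
  have B3c: "B3 \<in> carrier_mat n n" "B1 \<in> carrier_mat n n" "B2 \<in> carrier_mat n n" "I \<in> carrier_mat n r"
    using Q by auto
  let ?f = "\<lambda>k v. ((\<lambda>v. B3 *\<^sub>v v) ^^ k) v"
  define W where "W = {v \<in> carrier_vec n. \<forall>k. c *\<^sub>v ?f k v = 0\<^sub>v n}"
  have comm_inv: "c *\<^sub>v ?f k (M *\<^sub>v v) = 0\<^sub>v n"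
    if M: "M \<in> carrier_mat n n" "B3 * M = M * B3" "c * M = M * c" and v: "v \<in> W" for M v k
  proof -
    have vc: "v \<in> carrier_vec n" and v0: "c *\<^sub>v ?f k v = 0\<^sub>v n" using v unfolding W_def by auto
    have fc: "?f k v \<in> carrier_vec n" using iter_carrier B3c vc by blast
    have "c *\<^sub>v ?f k (M *\<^sub>v v) = c *\<^sub>v (M *\<^sub>v ?f k v)"
      using iter_comm[OF B3c(1) M(1) B3c(1) M(2) vc] by simp
    also have "\<dots> = (c * M) *\<^sub>v ?f k v" by (rule assoc_mult_mat_vec[symmetric]) (use cc M fc in auto)
    also have "\<dots> = M *\<^sub>v (c *\<^sub>v ?f k v)" unfolding M(3) by (rule assoc_mult_mat_vec) (use cc M fc in auto)
    also have "\<dots> = 0\<^sub>v n" unfolding v0 using M mat_vec_zero by blast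
    finally show ?thesis .
  qed
  have sub: "is_subspace n W"
    unfolding is_subspace_def
  proof (intro conjI ballI allI)
    show "W \<subseteq> carrier_vec n" unfolding W_def by auto
    show "0\<^sub>v n \<in> W" unfolding W_def using iter_zero[OF B3c(1)] mat_vec_zero[OF cc] by auto
    fix v w assume v: "v \<in> W" and w: "w \<in> W"
    then have vc: "v \<in> carrier_vec n" "w \<in> carrier_vec n" unfolding W_def by auto
    show "v + w \<in> W" unfolding W_def
    proof (intro CollectI conjI allI)
      fix k
      have "?f k v \<in> carrier_vec n" "?f k w \<in> carrier_vec n" using iter_carrier B3c vc by blast+
      then show "c *\<^sub>v ?f k (v + w) = 0\<^sub>v n"
        using v w vc cc unfolding W_def by (simp add: iter_add[OF B3c(1)] mult_add_distrib_mat_vec)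
    qed (use vc in auto)
  next
    fix a v assume v: "v \<in> W"
    then have vc: "v \<in> carrier_vec n" unfolding W_def by auto
    show "a \<cdot>\<^sub>v v \<in> W" unfolding W_def
    proof (intro CollectI conjI allI)
      fix k
      have "?f k v \<in> carrier_vec n" using iter_carrier B3c vc by blast
      then show "c *\<^sub>v ?f k (a \<cdot>\<^sub>v v) = 0\<^sub>v n"
        using v vc cc unfolding W_def by (simp add: iter_smult[OF B3c(1)] mult_mat_vec) (intro eq_vecI, auto)
    qed (use vc in auto)
  qed
  have inv1: "invariant B1 W" unfolding invariant_def
  proof
    fix v assume v: "v \<in> W"
    then show "B1 *\<^sub>v v \<in> W" using comm_inv[OF B3c(2) B31 cB1 v] B3c unfolding W_def by auto
  qed
  have inv2: "invariant B2 W" unfolding invariant_def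
  proof
    fix v assume v: "v \<in> W"
    then show "B2 *\<^sub>v v \<in> W" using comm_inv[OF B3c(3) B32 _ v] cB2 B3c unfolding W_def by auto
  qed
  have inv3: "invariant B3 W" unfolding invariant_def
  proof
    fix v assume v: "v \<in> W"
    then have "c *\<^sub>v ?f (Suc k) v = 0\<^sub>v n" for k unfolding W_def by blast
    then have "c *\<^sub>v ?f k (B3 *\<^sub>v v) = 0\<^sub>v n" for k by (simp add: funpow_Suc_right del: funpow.simps)
    then show "B3 *\<^sub>v v \<in> W" using v B3c unfolding W_def by auto
  qed
  have img: "contains_image r I W" unfolding contains_image_def
  proof
    fix u :: "'k vec" assume u: "u \<in> carrier_vec r"
    have gu: "((\<lambda>v. A_mat r *\<^sub>v v) ^^ k) u \<in> carrier_vec r" for k using iter_carrier A u by blast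
    have "c *\<^sub>v ?f k (I *\<^sub>v u) = 0\<^sub>v n" for k
    proof -
      have "c *\<^sub>v ?f k (I *\<^sub>v u) = c *\<^sub>v (I *\<^sub>v ((\<lambda>v. A_mat r *\<^sub>v v) ^^ k) u)"
        using iter_comm[OF B3c(1) B3c(4) A B3I u] by simp
      also have "\<dots> = (c * I) *\<^sub>v ((\<lambda>v. A_mat r *\<^sub>v v) ^^ k) u" by (rule assoc_mult_mat_vec[symmetric]) (use cc B3c gu in auto)
      also have "\<dots> = 0\<^sub>v n" unfolding cI using gu by (intro eq_vecI) auto
      finally show ?thesis .
    qed
    then show "I *\<^sub>v u \<in> W" using u B3c unfolding W_def by auto
  qed
  have stab: "\<And>W. is_subspace n W \<Longrightarrow> invariant B1 W \<Longrightarrow> invariant B2 W \<Longrightarrow> invariant B3 W \<Longrightarrow> contains_image r I W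
          \<Longrightarrow> W = carrier_vec n" using Q by blast
  have WV: "W = carrier_vec n" by (rule stab[OF sub inv1 inv2 inv3 img])
  have cv: "c *\<^sub>v v = 0\<^sub>v n" if "v \<in> carrier_vec n" for v
  proof -
    have "v \<in> W" using that WV by simp
    then have "c *\<^sub>v ?f 0 v = 0\<^sub>v n" unfolding W_def by blast
    then show ?thesis by simp
  qed
  have c0: "c = 0\<^sub>m n n"
  proof (rule eq_matI)
    fix a b assume ab: "a < dim_row (0\<^sub>m n n :: 'k mat)" "b < dim_col (0\<^sub>m n n :: 'k mat)"
    have "(c *\<^sub>v unit_vec n b) $ a = 0" using cv[of "unit_vec n b"] ab by simp
    then show "c $$ (a,b) = 0\<^sub>m n n $$ (a,b)" using ab cc by simp
  qed (use cc in auto)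
  have b3e: "b3 - b3' = comm \<xi> B3"
  proof (rule eq_matI)
    fix a b assume ab: "a < dim_row (comm \<xi> B3)" "b < dim_col (comm \<xi> B3)"
    have "c $$ (a,b) = 0" using c0 ab xi B3c by (simp add: comm_def)
    then show "(b3 - b3') $$ (a,b) = comm \<xi> B3 $$ (a,b)"
      using ab xi B3c T T' unfolding c_def comm_def by (simp del: index_mult_mat(1))
  qed (use xi B3c T T' in \<open>auto simp: comm_def\<close>)
  show ?thesis unfolding Q_equiv_def tt tt' using xi b3e by auto
qed

end
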